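(* Let $(\mathcal{N},r)$ be a ranked $X$-cactus. Then $\mathcal{S}_i(\mathcal{N})$ is a polestar system on $X$ for every $0\le i\le\sigma(r)$.
   Context: Let $X$ be a finite non-empty set. A rooted DAG $N=(V,A)$ is a finite directed acyclic graph with a vertex $\rho$ of indegree $0$ (the root) from which every vertex is reachable. Leaf: outdegree $0$; tree vertex: indegree $\le1$; reticulation vertex: indegree $\ge2$; if $(u,v)\in A$, $u$ is a parent of $v$. A reticulation cycle consists of two distinct directed paths with the same start and end vertex and no other common vertices. A rooted $X$-cactus $\mathcal{N}=(N,\varphi)$ is a rooted DAG with $\varphi:X\to V$ such that every vertex has indegree $\le2$, no two distinct reticulation cycles share an arc, and $\varphi(X)$ contains all leaves and all tree vertices of outdegree $1$. A time-stamp function is $t:V\to\mathbb{R}_{\ge0}$ with $t(v)=0$ for $v\in\varphi(X)$; $t(u)>t(v)$ for every arc $(u,v)$ with $v$ not a reticulation vertex; $t(v)=t(p_1)=t(p_2)$ for each reticulation vertex $v$ with parents $p_1,p_2$. Size $\sigma(t)=|t(V)|-1$. A ranking is a time-stamp function $r$ with $r(V)=\{0,\dots,\sigma(r)\}$; a ranked $X$-cactus is a rooted $X$-cactus admitting a time-stamp function, together with a ranking. A vertex $u$ is a descendant of $v$ if some directed path from the root to $u$ contains $v$; strict if every such path contains $v$, non-strict otherwise. $S(u)=\{x:\varphi(x)$ strict descendant of $u\}$, $H(u)=\{x:\varphi(x)$ non-strict descendant of $u\}$. For $0\le i\le\sigma(r)$, $V_i=\{u\in V:r(u)\le i$ and $r(p)>i$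 for all parents $p$ of $u\}$ and $\mathcal{S}_i(\mathcal{N})=\{(S(u),H(u)):u\in V_i\}\cup\{(H(u),\emptyset):u\in V_i,H(u)\ne\emptyset\}$. A set pair system on $X$ is a set of ordered pairs $(S,H)$ of subsets of $X$ with $S\ne\emptyset$, $S\cap H=\emptyset$. It is a polestar system (partition-like) if (PL1) $\mathcal{P}(\mathcal{S})=\{S:(S,H)\in\mathcal{S}\}$ is a partition of $X$; (PL2) distinct $(S,H),(S',H')\in\mathcal{S}$ have $S\ne S'$; (PL3) for each $(S,H)\in\mathcal{S}$ with $H\ne\emptyset$ we have $(H,\emptyset)\in\mathcal{S}$ and there is exactly one $(S',H')\in\mathcal{S}$ with $(S',H')\ne(S,H)$ and $H'=H$. *)

theory Defs
  imports Complex_Main "HOL-Library.Disjoint_Sets"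
begin

definition path_arcs :: "'v list \<Rightarrow> ('v \<times> 'v) set" where
  "path_arcs p = set (zip p (tl p))"

definition dpath :: "('v \<times> 'v) set \<Rightarrow> 'v list \<Rightarrow> bool" where
  "dpath A p \<longleftrightarrow> p \<noteq> [] \<and> path_arcs p \<subseteq> A"

definition parents :: "('v \<times> 'v) set \<Rightarrow> 'v \<Rightarrow> 'v set" where
  "parents A v = {u. (u, v) \<in> A}"

definition children :: "('v \<times> 'v) set \<Rightarrow> 'v \<Rightarrow> 'v set" where
  "children A v = {w. (v, w) \<in> A}"

definition indeg :: "('v \<times> 'v) set \<Rightarrow> 'v \<Rightarrow> nat" where
  "indeg A v = card (parents A v)"

definition outdeg :: "('v \<times> 'v) set \<Rightarrow> 'v \<Rightarrow> nat" where
  "outdeg A v = card (children A v)"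

definition is_leaf :: "('v \<times> 'v) set \<Rightarrow> 'v \<Rightarrow> bool" where
  "is_leaf A v \<longleftrightarrow> outdeg A v = 0"

definition is_tree_vertex :: "('v \<times> 'v) set \<Rightarrow> 'v \<Rightarrow> bool" where
  "is_tree_vertex A v \<longleftrightarrow> indeg A v \<le> 1"

definition is_reticulation :: "('v \<times> 'v) set \<Rightarrow> 'v \<Rightarrow> bool" where
  "is_reticulation A v \<longleftrightarrow> indeg A v \<ge> 2"

definition rooted_dag :: "'v set \<Rightarrow> ('v \<times> 'v) set \<Rightarrow> 'v \<Rightarrow> bool" where
  "rooted_dag V A \<rho> \<longleftrightarrow>
     finite V \<and> A \<subseteq> V \<times> V \<and> (\<forall>v. (v, v) \<notin> A\<^sup>+) \<and>
     \<rho> \<in> V \<and> indeg A \<rho> = 0 \<and> (\<forall>v\<in>V. (\<rho>, v) \<in> A\<^sup>*)"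

text \<open>Reticulation cycles, each identified with its set of arcs (the union of
  the arc sets of its two internally vertex-disjoint paths).\<close>

definition reticulation_cycles :: "('v \<times> 'v) set \<Rightarrow> ('v \<times> 'v) set set" where
  "reticulation_cycles A =
     {path_arcs P \<union> path_arcs Q | P Q.
        dpath A P \<and> dpath A Q \<and> P \<noteq> Q \<and> hd P = hd Q \<and> last P = last Q \<and>
        set P \<inter> set Q = {hd P, last P}}"

definition rooted_cactus ::
  "'x set \<Rightarrow> 'v set \<Rightarrow> ('v \<times> 'v) set \<Rightarrow> 'v \<Rightarrow> ('x \<Rightarrow> 'v) \<Rightarrow> bool" where
  "rooted_cactus X V A \<rho> \<phi> \<longleftrightarrow>
     finite X \<and> X \<noteq> {} \<and> rooted_dag V A \<rho> \<and> \<phi> ` X \<subseteq> V \<and>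
     (\<forall>v\<in>V. indeg A v \<le> 2) \<and>
     (\<forall>C1\<in>reticulation_cycles A. \<forall>C2\<in>reticulation_cycles A. C1 \<noteq> C2 \<longrightarrow> C1 \<inter> C2 = {}) \<and>
     (\<forall>v\<in>V. is_leaf A v \<longrightarrow> v \<in> \<phi> ` X) \<and>
     (\<forall>v\<in>V. is_tree_vertex A v \<and> outdeg A v = 1 \<longrightarrow> v \<in> \<phi> ` X)"

definition time_stamp ::
  "'x set \<Rightarrow> 'v set \<Rightarrow> ('v \<times> 'v) set \<Rightarrow> ('x \<Rightarrow> 'v) \<Rightarrow> ('v \<Rightarrow> real) \<Rightarrow> bool" where
  "time_stamp X V A \<phi> t \<longleftrightarrow>
     (\<forall>v\<in>V. t v \<ge> 0) \<and>
     (\<forall>x\<in>X. t (\<phi> x) = 0) \<and>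
     (\<forall>(u, v)\<in>A. \<not> is_reticulation A v \<longrightarrow> t u > t v) \<and>
     (\<forall>v\<in>V. is_reticulation A v \<longrightarrow> (\<forall>p\<in>parents A v. t p = t v))"

definition ts_size :: "'v set \<Rightarrow> ('v \<Rightarrow> real) \<Rightarrow> nat" where
  "ts_size V t = card (t ` V) - 1"

definition ranking ::
  "'x set \<Rightarrow> 'v set \<Rightarrow> ('v \<times> 'v) set \<Rightarrow> ('x \<Rightarrow> 'v) \<Rightarrow> ('v \<Rightarrow> real) \<Rightarrow> bool" where
  "ranking X V A \<phi> r \<longleftrightarrow>
     time_stamp X V A \<phi> r \<and> r ` V = real ` {0..ts_size V r}"

definition ranked_cactus ::
  "'x set \<Rightarrow> 'v set \<Rightarrow> ('v \<times> 'v) set \<Rightarrow> 'v \<Rightarrow> ('x \<Rightarrow> 'v) \<Rightarrow> ('v \<Rightarrow> real) \<Rightarrow> bool" where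
  "ranked_cactus X V A \<rho> \<phi> r \<longleftrightarrow>
     rooted_cactus X V A \<rho> \<phi> \<and> (\<exists>t. time_stamp X V A \<phi> t) \<and> ranking X V A \<phi> r"

definition root_paths :: "('v \<times> 'v) set \<Rightarrow> 'v \<Rightarrow> 'v \<Rightarrow> 'v list set" where
  "root_paths A \<rho> u = {p. dpath A p \<and> hd p = \<rho> \<and> last p = u}"

definition descendant :: "('v \<times> 'v) set \<Rightarrow> 'v \<Rightarrow> 'v \<Rightarrow> 'v \<Rightarrow> bool" where
  "descendant A \<rho> u v \<longleftrightarrow> (\<exists>p\<in>root_paths A \<rho> u. v \<in> set p)"

definition strict_descendant :: "('v \<times> 'v) set \<Rightarrow> 'v \<Rightarrow> 'v \<Rightarrow> 'v \<Rightarrow> bool" where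
  "strict_descendant A \<rho> u v \<longleftrightarrow>
     descendant A \<rho> u v \<and> (\<forall>p\<in>root_paths A \<rho> u. v \<in> set p)"

definition nonstrict_descendant :: "('v \<times> 'v) set \<Rightarrow> 'v \<Rightarrow> 'v \<Rightarrow> 'v \<Rightarrow> bool" where
  "nonstrict_descendant A \<rho> u v \<longleftrightarrow>
     descendant A \<rho> u v \<and> \<not> strict_descendant A \<rho> u v"

definition Sset :: "'x set \<Rightarrow> ('v \<times> 'v) set \<Rightarrow> 'v \<Rightarrow> ('x \<Rightarrow> 'v) \<Rightarrow> 'v \<Rightarrow> 'x set" where
  "Sset X A \<rho> \<phi> u = {x\<in>X. strict_descendant A \<rho> (\<phi> x) u}"

definition Hset :: "'x set \<Rightarrow> ('v \<times> 'v) set \<Rightarrow> 'v \<Rightarrow> ('x \<Rightarrow> 'v) \<Rightarrow> 'v \<Rightarrow> 'x set" where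
  "Hset X A \<rho> \<phi> u = {x\<in>X. nonstrict_descendant A \<rho> (\<phi> x) u}"

definition Vlevel :: "'v set \<Rightarrow> ('v \<times> 'v) set \<Rightarrow> ('v \<Rightarrow> real) \<Rightarrow> nat \<Rightarrow> 'v set" where
  "Vlevel V A r i = {u\<in>V. r u \<le> real i \<and> (\<forall>p\<in>parents A u. r p > real i)}"

definition Ssys ::
  "'x set \<Rightarrow> 'v set \<Rightarrow> ('v \<times> 'v) set \<Rightarrow> 'v \<Rightarrow> ('x \<Rightarrow> 'v) \<Rightarrow> ('v \<Rightarrow> real) \<Rightarrow> nat
     \<Rightarrow> ('x set \<times> 'x set) set" where
  "Ssys X V A \<rho> \<phi> r i =
     {(Sset X A \<rho> \<phi> u, Hset X A \<rho> \<phi> u) | u. u \<in> Vlevel V A r i} \<union>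
     {(Hset X A \<rho> \<phi> u, {}) | u. u \<in> Vlevel V A r i \<and> Hset X A \<rho> \<phi> u \<noteq> {}}"

definition set_pair_system :: "'x set \<Rightarrow> ('x set \<times> 'x set) set \<Rightarrow> bool" where
  "set_pair_system X \<S> \<longleftrightarrow>
     (\<forall>(S, H)\<in>\<S>. S \<subseteq> X \<and> H \<subseteq> X \<and> S \<noteq> {} \<and> S \<inter> H = {})"

definition polestar_system :: "'x set \<Rightarrow> ('x set \<times> 'x set) set \<Rightarrow> bool" where
  "polestar_system X \<S> \<longleftrightarrow>
     set_pair_system X \<S> \<and>
     partition_on X (fst ` \<S>) \<and>
     (\<forall>a\<in>\<S>. \<forall>b\<in>\<S>. a \<noteq> b \<longrightarrow> fst a \<noteq> fst b) \<and>
     (\<forall>(S, H)\<in>\<S>. H \<noteq> {} \<longrightarrow>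
        (H, {}) \<in> \<S> \<and> (\<exists>!(S', H')\<in>\<S>. (S', H') \<noteq> (S, H) \<and> H' = H))"

end

theory Submission
  imports Defs
begin


lemma path_arcs_Nil[simp]: "path_arcs [] = {}"
  by (simp add: path_arcs_def)
lemma path_arcs_single[simp]: "path_arcs [x] = {}"
  by (simp add: path_arcs_def)
lemma path_arcs_Cons2[simp]: "path_arcs (x # y # zs) = insert (x,y) (path_arcs (y # zs))"
  by (simp add: path_arcs_def)

lemma path_arcs_append:
  "xs \<noteq> [] \<Longrightarrow> ys \<noteq> [] \<Longrightarrow>
   path_arcs (xs @ ys) = path_arcs xs \<union> path_arcs ys \<union> {(last xs, hd ys)}"
proof (induction xs)
  case Nil then show ?case by simp
next
  case (Cons x xs)
  show ?case
  proof (cases xs)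
    case Nil
    then show ?thesis using Cons.prems by (cases ys) auto
  next
    case (Cons y zs)
    then show ?thesis using Cons.IH Cons.prems by auto
  qed
qed

lemma path_arcs_snoc: "xs \<noteq> [] \<Longrightarrow> path_arcs (xs @ [y]) = insert (last xs, y) (path_arcs xs)"
  using path_arcs_append[of xs "[y]"] by auto

lemma path_arcs_suffix: "path_arcs ys \<subseteq> path_arcs (xs @ ys)"
  by (cases "xs = []"; cases "ys = []") (auto simp: path_arcs_append)

lemma path_arcs_prefix: "path_arcs xs \<subseteq> path_arcs (xs @ ys)"
  by (cases "xs = []"; cases "ys = []") (auto simp: path_arcs_append)

lemma path_arcs_take: "path_arcs (take n xs) \<subseteq> path_arcs xs"
  using path_arcs_prefix[of "take n xs" "drop n xs"] by simp

lemma path_arcs_drop: "path_arcs (drop n xs) \<subseteq> path_arcs xs"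
  using path_arcs_suffix[of "drop n xs" "take n xs"] by simp

lemma mem_path_arcs:
  "(a,b) \<in> path_arcs p \<longleftrightarrow> (\<exists>j. Suc j < length p \<and> p!j = a \<and> p!Suc j = b)"
proof
  assume "(a,b) \<in> path_arcs p"
  then obtain j where "j < min (length p) (length (tl p))" "(a,b) = (p!j, tl p ! j)"
    unfolding path_arcs_def set_zip by auto
  then show "\<exists>j. Suc j < length p \<and> p!j = a \<and> p!Suc j = b"
    by (intro exI[of _ j]) (auto simp: nth_tl)
next
  assume "\<exists>j. Suc j < length p \<and> p!j = a \<and> p!Suc j = b"
  then obtain j where "Suc j < length p" "p!j = a" "p!Suc j = b" by blast
  then show "(a,b) \<in> path_arcs p"
    unfolding path_arcs_def set_zip by (auto simp: nth_tl intro!: exI[of _ j])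
qed

lemma dpath_nth_arc: "dpath A p \<Longrightarrow> Suc j < length p \<Longrightarrow> (p!j, p!Suc j) \<in> A"
  unfolding dpath_def using mem_path_arcs[of "p!j" "p!Suc j" p] by auto

lemma dpath_nth_rtrancl:
  assumes "dpath A p" "j \<le> k" "k < length p"
  shows "(p!j, p!k) \<in> A\<^sup>*"
  using assms(2,3)
proof (induction k)
  case 0 then show ?case by simp
next
  case (Suc k)
  show ?case
  proof (cases "j = Suc k")
    case True then show ?thesis by simp
  next
    case False
    then have "(p!j, p!k) \<in> A\<^sup>*" using Suc by auto
    moreover have "(p!k, p!Suc k) \<in> A" using dpath_nth_arc[OF assms(1)] Suc.prems by auto
    ultimately show ?thesis by (rule rtrancl_into_rtrancl)
  qed
qed

lemma dpath_nth_trancl: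
  assumes "dpath A p" "j < k" "k < length p"
  shows "(p!j, p!k) \<in> A\<^sup>+"
proof -
  obtain k' where k: "k = Suc k'" using assms(2) by (cases k) auto
  have "(p!j, p!k') \<in> A\<^sup>*" using dpath_nth_rtrancl[OF assms(1)] assms k by auto
  moreover have "(p!k', p!k) \<in> A" using dpath_nth_arc[OF assms(1)] assms k by auto
  ultimately show ?thesis by (rule rtrancl_into_trancl1)
qed

lemma dpath_mem_reach:
  assumes "dpath A p" "v \<in> set p"
  shows "(hd p, v) \<in> A\<^sup>*" "(v, last p) \<in> A\<^sup>*"
proof -
  obtain k where k: "k < length p" "p!k = v" using assms(2) by (auto simp: in_set_conv_nth)
  have ne: "p \<noteq> []" using assms(1) by (simp add: dpath_def)
  show "(hd p, v) \<in> A\<^sup>*" using dpath_nth_rtrancl[OF assms(1), of 0 k] k ne by (simp add: hd_conv_nth)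
  show "(v, last p) \<in> A\<^sup>*" using dpath_nth_rtrancl[OF assms(1), of k "length p - 1"] k ne
    by (simp add: last_conv_nth)
qed

lemma dpath_snoc: "dpath A p \<Longrightarrow> (last p, c) \<in> A \<Longrightarrow> dpath A (p @ [c])"
  unfolding dpath_def by (auto simp: path_arcs_snoc)

lemma rtrancl_dpath:
  assumes "(a,b) \<in> A\<^sup>*"
  shows "\<exists>p. dpath A p \<and> hd p = a \<and> last p = b"
  using assms
proof (induction rule: rtrancl_induct)
  case base
  then show ?case by (intro exI[of _ "[a]"]) (simp add: dpath_def)
next
  case (step y z)
  then obtain p where "dpath A p" "hd p = a" "last p = y" by blast
  then show ?case using step(2) dpath_snoc[of A p z]
    by (intro exI[of _ "p @ [z]"]) (auto simp: dpath_def)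
qed

lemma dpath_append:
  assumes "dpath A p" "dpath A q" "(last p, hd q) \<in> A"
  shows "dpath A (p @ q)"
  using assms unfolding dpath_def by (auto simp: path_arcs_append)

lemma dpath_take: "dpath A p \<Longrightarrow> n > 0 \<Longrightarrow> dpath A (take n p)"
  unfolding dpath_def using path_arcs_take by fastforce

lemma dpath_drop: "dpath A p \<Longrightarrow> n < length p \<Longrightarrow> dpath A (drop n p)"
  unfolding dpath_def using path_arcs_drop by fastforce

lemma dpath_distinct:
  assumes acyc: "\<forall>v. (v,v) \<notin> A\<^sup>+" and p: "dpath A p"
  shows "distinct p"
proof (rule ccontr)
  assume "\<not> distinct p"
  then obtain j k where "j < k" "k < length p" "p!j = p!k"
    by (metis distinct_conv_nth linorder_neqE_nat)
  then show False using dpath_nth_trancl[OF p, of j k] acyc by auto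
qed




locale RC =
  fixes X :: "'x set" and V :: "'v set" and A :: "('v \<times> 'v) set"
    and \<rho> :: 'v and \<phi> :: "'x \<Rightarrow> 'v" and r :: "'v \<Rightarrow> real" and i :: nat
  assumes rc: "ranked_cactus X V A \<rho> \<phi> r"
begin

abbreviation lo where "lo v \<equiv> r v \<le> real i"
abbreviation Vl where "Vl \<equiv> Vlevel V A r i"

lemma basics:
  "finite V" "A \<subseteq> V \<times> V" "\<forall>v. (v,v) \<notin> A\<^sup>+" "\<rho> \<in> V" "indeg A \<rho> = 0"
  "\<forall>v\<in>V. (\<rho>,v) \<in> A\<^sup>*" "finite X" "X \<noteq> {}" "\<phi> ` X \<subseteq> V"
  "\<forall>C1\<in>reticulation_cycles A. \<forall>C2\<in>reticulation_cycles A. C1 \<noteq> C2 \<longrightarrow> C1 \<inter> C2 = {}"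
  "\<forall>v\<in>V. is_leaf A v \<longrightarrow> v \<in> \<phi> ` X"
  "\<forall>v\<in>V. is_tree_vertex A v \<and> outdeg A v = 1 \<longrightarrow> v \<in> \<phi> ` X"
  using rc unfolding ranked_cactus_def rooted_cactus_def rooted_dag_def by auto

lemma finV: "finite V" using basics by simp
lemma AV: "(a,b) \<in> A \<Longrightarrow> a \<in> V \<and> b \<in> V" using basics(2) by auto
lemma acyc: "\<forall>v. (v,v) \<notin> A\<^sup>+" using basics by simp
lemma rhoV: "\<rho> \<in> V" using basics by simp
lemma reach: "v \<in> V \<Longrightarrow> (\<rho>,v) \<in> A\<^sup>*" using basics by simp
lemma phiV: "x \<in> X \<Longrightarrow> \<phi> x \<in> V" using basics by auto
lemma cact: "C1 \<in> reticulation_cycles A \<Longrightarrow> C2 \<in> reticulation_cycles A \<Longrightarrow> e \<in> C1 \<Longrightarrow> e \<in> C2 \<Longrightarrow> C1 = C2"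
  using basics(10) by blast

lemma ts: "time_stamp X V A \<phi> r" using rc by (simp add: ranked_cactus_def ranking_def)
lemma r0: "x \<in> X \<Longrightarrow> r (\<phi> x) = 0" using ts by (simp add: time_stamp_def)
lemma rarc: "(a,b) \<in> A \<Longrightarrow> \<not> is_reticulation A b \<Longrightarrow> r b < r a"
  using ts unfolding time_stamp_def by fast
lemma rret: "is_reticulation A b \<Longrightarrow> a \<in> parents A b \<Longrightarrow> r a = r b"
proof -
  assume "is_reticulation A b" "a \<in> parents A b"
  then have "b \<in> V" using AV by (auto simp: parents_def)
  then show "r a = r b" using ts \<open>is_reticulation A b\<close> \<open>a \<in> parents A b\<close>
    unfolding time_stamp_def by blast
qed

lemma parents_fin: "finite (parents A v)"
proof -
  have "parents A v \<subseteq> V" using AV by (auto simp: parents_def)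
  then show ?thesis using finV finite_subset by blast
qed

lemma children_fin: "finite (children A v)"
proof -
  have "children A v \<subseteq> V" using AV by (auto simp: children_def)
  then show ?thesis using finV finite_subset by blast
qed

lemma rmono: "(a,b) \<in> A \<Longrightarrow> r b \<le> r a"
proof (cases "is_reticulation A b")
  case True
  assume "(a,b) \<in> A"
  then show ?thesis using rret[OF True] by (auto simp: parents_def)
next
  case False
  assume "(a,b) \<in> A"
  then show ?thesis using rarc False by fastforce
qed

lemma rmono_rt: "(a,b) \<in> A\<^sup>* \<Longrightarrow> r b \<le> r a"
proof (induction rule: rtrancl_induct)
  case base then show ?case by simp
next
  case (step y z) then show ?case using rmono[of y z] by linarith
qed

lemma ret_other_parent: "is_reticulation A v \<Longrightarrow> a \<in> parents A v \<Longrightarrow> \<exists>b\<in>parents A v. b \<noteq> a"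
proof (rule ccontr)
  assume "is_reticulation A v" "a \<in> parents A v" "\<not> (\<exists>b\<in>parents A v. b \<noteq> a)"
  then have "parents A v \<subseteq> {a}" by blast
  then have "card (parents A v) \<le> card {a}" by (intro card_mono) auto
  then have "card (parents A v) \<le> Suc 0" by simp
  then show False using \<open>is_reticulation A v\<close> by (simp add: is_reticulation_def indeg_def)
qed

lemma ret_has_parent: "is_reticulation A v \<Longrightarrow> \<exists>a. a \<in> parents A v"
proof (rule ccontr)
  assume "is_reticulation A v" "\<nexists>a. a \<in> parents A v"
  then have "parents A v = {}" by auto
  then show False using \<open>is_reticulation A v\<close> by (simp add: is_reticulation_def indeg_def)
qed

lemma tree_parent: "\<not> is_reticulation A v \<Longrightarrow> a \<in> parents A v \<Longrightarrow> b \<in> parents A v \<Longrightarrow> a = b"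
proof -
  assume "\<not> is_reticulation A v" "a \<in> parents A v" "b \<in> parents A v"
  then have "card (parents A v) \<le> Suc 0" by (simp add: is_reticulation_def indeg_def)
  then show "a = b" using card_le_Suc0_iff_eq[OF parents_fin] \<open>a \<in> _\<close> \<open>b \<in> _\<close> by blast
qed

lemma Vl_D: "u \<in> Vl \<Longrightarrow> u \<in> V \<and> lo u \<and> (\<forall>p\<in>parents A u. \<not> lo p)"
  by (auto simp: Vlevel_def)

lemma Vl_not_ret: "u \<in> Vl \<Longrightarrow> \<not> is_reticulation A u"
proof
  assume "u \<in> Vl" "is_reticulation A u"
  then obtain a where "a \<in> parents A u" using ret_has_parent by blast
  then have "r a = r u" "\<not> lo a" "lo u" using rret \<open>is_reticulation A u\<close> Vl_D[OF \<open>u \<in> Vl\<close>] by auto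
  then show False by linarith
qed

lemma Vl_reach_eq: "u \<in> Vl \<Longrightarrow> u' \<in> Vl \<Longrightarrow> (u,u') \<in> A\<^sup>* \<Longrightarrow> u = u'"
proof (erule rtranclE)
  fix y assume "u \<in> Vl" "u' \<in> Vl" "(u,y) \<in> A\<^sup>*" "(y,u') \<in> A"
  then have "r y \<le> r u" "lo u" "\<not> lo y" using rmono_rt Vl_D by (auto simp: parents_def)
  then show "u = u'" by linarith
qed simp

lemma rho_Vl: "lo \<rho> \<Longrightarrow> \<rho> \<in> Vl"
proof -
  assume "lo \<rho>"
  have "parents A \<rho> = {}" using basics(5) parents_fin[of \<rho>] by (simp add: indeg_def)
  then show ?thesis using \<open>lo \<rho>\<close> rhoV by (simp add: Vlevel_def)
qed

lemma Vl_rho: "\<rho> \<in> Vl \<Longrightarrow> u \<in> Vl \<Longrightarrow> u = \<rho>"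
proof -
  assume "\<rho> \<in> Vl" "u \<in> Vl"
  then have "(\<rho>, u) \<in> A\<^sup>*" using reach Vl_D by blast
  then show "u = \<rho>" using Vl_reach_eq \<open>\<rho> \<in> Vl\<close> \<open>u \<in> Vl\<close> by blast
qed

lemma Vl_parent: "u \<in> Vl \<Longrightarrow> u \<noteq> \<rho> \<Longrightarrow> \<exists>p. (p,u) \<in> A \<and> \<not> lo p"
proof -
  assume u: "u \<in> Vl" "u \<noteq> \<rho>"
  then have "(\<rho>,u) \<in> A\<^sup>*" using reach Vl_D by blast
  then obtain y where "(y,u) \<in> A" using u(2) by (auto elim: rtranclE)
  then show ?thesis using Vl_D[OF u(1)] by (auto simp: parents_def)
qed

lemma dpath_V: "dpath A p \<Longrightarrow> hd p \<in> V \<Longrightarrow> set p \<subseteq> V"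
proof
  fix v assume "dpath A p" "hd p \<in> V" "v \<in> set p"
  then have "(hd p, v) \<in> A\<^sup>*" using dpath_mem_reach by metis
  then show "v \<in> V" using \<open>hd p \<in> V\<close> by (auto elim: rtranclE dest: AV)
qed

lemma cross:
  "dpath A P \<Longrightarrow> lo (last P) \<Longrightarrow> \<not> lo (hd P) \<or> hd P \<in> Vl \<Longrightarrow> \<exists>u\<in>set P. u \<in> Vl"
proof (induction P)
  case Nil then show ?case by (simp add: dpath_def)
next
  case (Cons a P)
  show ?case
  proof (cases "a \<in> Vl")
    case True then show ?thesis by simp
  next
    case False
    then have ha: "\<not> lo a" using Cons.prems by simp
    show ?thesis
    proof (cases P)
      case Nil then show ?thesis using Cons.prems ha by simp
    next
      case (Cons b rest)
      have ab: "(a,b) \<in> A" using Cons \<open>dpath A (a # P)\<close> by (auto simp: dpath_def)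
      have dP: "dpath A P" using Cons \<open>dpath A (a # P)\<close> by (auto simp: dpath_def)
      show ?thesis
      proof (cases "lo b")
        case True
        have nr: "\<not> is_reticulation A b"
        proof
          assume "is_reticulation A b"
          then have "r a = r b" using rret ab by (simp add: parents_def)
          then show False using ha True by linarith
        qed
        have "\<forall>p\<in>parents A b. \<not> lo p"
        proof
          fix p assume "p \<in> parents A b"
          then have "p = a" using tree_parent[OF nr, of p a] ab by (simp add: parents_def)
          then show "\<not> lo p" using ha by simp
        qed
        then have "b \<in> Vl" using True AV[OF ab] by (simp add: Vlevel_def not_le)
        then show ?thesis using Cons by simp
      next
        case False
        then show ?thesis using Cons.IH dP \<open>lo (last (a # P))\<close> \<open>P = b # rest\<close> by auto
      qed
    qed
  qed
qed

lemma dpath_join: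
  assumes "dpath A p" "dpath A q" "last p = hd q"
  shows "dpath A (p @ tl q) \<and> hd (p @ tl q) = hd p \<and> last (p @ tl q) = last q \<and>
         set (p @ tl q) = set p \<union> set q"
proof (cases q)
  case Nil then show ?thesis using assms by (simp add: dpath_def)
next
  case (Cons x q')
  have pne: "p \<noteq> []" using assms by (simp add: dpath_def)
  show ?thesis
  proof (cases q')
    case Nil
    have "x = last p" using \<open>q = x # q'\<close> assms(3) by simp
    then have "x \<in> set p" using pne by simp
    then show ?thesis using \<open>q = x # q'\<close> Nil \<open>x = last p\<close> assms(1) by auto
  next
    case (Cons y q'')
    have xl: "x = last p" using \<open>q = x # q'\<close> assms(3) by simp
    then have "x \<in> set p" using pne by simp
    have "dpath A q'" using \<open>q = x # q'\<close> Cons assms(2) by (auto simp: dpath_def)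
    moreover have "(last p, hd q') \<in> A" using \<open>q = x # q'\<close> Cons assms(2) xl by (auto simp: dpath_def)
    ultimately have "dpath A (p @ q')" using dpath_append assms(1) by blast
    moreover have "hd (p @ q') = hd p" using pne by simp
    moreover have "last (p @ q') = last q" using \<open>q = x # q'\<close> Cons by simp
    moreover have "set (p @ q') = set p \<union> set q" using \<open>q = x # q'\<close> \<open>x \<in> set p\<close> by auto
    ultimately show ?thesis using \<open>q = x # q'\<close> by simp
  qed
qed

definition Up where "Up w = {u \<in> Vl. (u,w) \<in> A\<^sup>*}"

lemma root_path: "v \<in> V \<Longrightarrow> \<exists>p. dpath A p \<and> hd p = \<rho> \<and> last p = v"
  by (rule rtrancl_dpath, rule reach)

lemma rho_cond: "\<not> lo \<rho> \<or> \<rho> \<in> Vl" using rho_Vl by blast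

lemma Up_ne: "w \<in> V \<Longrightarrow> lo w \<Longrightarrow> Up w \<noteq> {}"
proof -
  assume "w \<in> V" "lo w"
  obtain p where p: "dpath A p" "hd p = \<rho>" "last p = w" using root_path[OF \<open>w \<in> V\<close>] by blast
  obtain u where "u \<in> set p" "u \<in> Vl" using cross[OF p(1)] p \<open>lo w\<close> rho_cond by auto
  then have "u \<in> Up w" using dpath_mem_reach[OF p(1)] p(3) by (auto simp: Up_def)
  then show ?thesis by blast
qed

lemma desc_iff: "v \<in> V \<Longrightarrow> descendant A \<rho> w v \<longleftrightarrow> (v,w) \<in> A\<^sup>*"
proof
  assume "descendant A \<rho> w v"
  then obtain p where "dpath A p" "last p = w" "v \<in> set p" by (auto simp: descendant_def root_paths_def)
  then show "(v,w) \<in> A\<^sup>*" using dpath_mem_reach by metis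
next
  assume v: "v \<in> V" and vw: "(v,w) \<in> A\<^sup>*"
  obtain p1 where p1: "dpath A p1" "hd p1 = \<rho>" "last p1 = v" using root_path[OF v] by blast
  obtain p2 where p2: "dpath A p2" "hd p2 = v" "last p2 = w" using rtrancl_dpath[OF vw] by blast
  have "p1 \<noteq> []" using p1(1) by (simp add: dpath_def)
  then have "v \<in> set p1" using p1(3) by (metis last_in_set)
  have j: "dpath A (p1 @ tl p2) \<and> hd (p1 @ tl p2) = \<rho> \<and> last (p1 @ tl p2) = w \<and>
         set (p1 @ tl p2) = set p1 \<union> set p2" using dpath_join[OF p1(1) p2(1)] p1 p2 by simp
  show "descendant A \<rho> w v" unfolding descendant_def root_paths_def
    apply (rule bexI[of _ "p1 @ tl p2"])
    using j \<open>v \<in> set p1\<close> by auto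
qed

lemma strict_iff:
  assumes u: "u \<in> Vl" and w: "w \<in> V" "lo w"
  shows "strict_descendant A \<rho> w u \<longleftrightarrow> (u,w) \<in> A\<^sup>* \<and> Up w \<subseteq> {u}"
proof
  assume sd: "strict_descendant A \<rho> w u"
  then have uw: "(u,w) \<in> A\<^sup>*" using desc_iff Vl_D[OF u] by (simp add: strict_descendant_def)
  have "Up w \<subseteq> {u}"
  proof
    fix u' assume "u' \<in> Up w"
    then have u': "u' \<in> Vl" "(u',w) \<in> A\<^sup>*" by (auto simp: Up_def)
    obtain p1 where p1: "dpath A p1" "hd p1 = \<rho>" "last p1 = u'" using root_path Vl_D[OF u'(1)] by blast
    obtain p2 where p2: "dpath A p2" "hd p2 = u'" "last p2 = w" using rtrancl_dpath[OF u'(2)] by blast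
    have j: "dpath A (p1 @ tl p2) \<and> hd (p1 @ tl p2) = \<rho> \<and> last (p1 @ tl p2) = w \<and>
         set (p1 @ tl p2) = set p1 \<union> set p2" using dpath_join[OF p1(1) p2(1)] p1 p2 by simp
    then have "u \<in> set p1 \<union> set p2" using sd unfolding strict_descendant_def root_paths_def by auto
    then show "u' \<in> {u}"
    proof
      assume "u \<in> set p1"
      then have "(u,u') \<in> A\<^sup>*" using dpath_mem_reach(2)[OF p1(1)] p1 by metis
      then show ?thesis using Vl_reach_eq u u' by blast
    next
      assume "u \<in> set p2"
      then have "(u',u) \<in> A\<^sup>*" using dpath_mem_reach(1)[OF p2(1)] p2 by metis
      then show ?thesis using Vl_reach_eq u u' by blast
    qed
  qed
  then show "(u,w) \<in> A\<^sup>* \<and> Up w \<subseteq> {u}" using uw by simp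
next
  assume h: "(u,w) \<in> A\<^sup>* \<and> Up w \<subseteq> {u}"
  have "\<forall>p\<in>root_paths A \<rho> w. u \<in> set p"
  proof
    fix p assume "p \<in> root_paths A \<rho> w"
    then have p: "dpath A p" "hd p = \<rho>" "last p = w" by (auto simp: root_paths_def)
    obtain u' where "u' \<in> set p" "u' \<in> Vl" using cross[OF p(1)] p w(2) rho_cond by auto
    then have "u' \<in> Up w" using dpath_mem_reach[OF p(1)] p(3) by (auto simp: Up_def)
    then show "u \<in> set p" using h \<open>u' \<in> set p\<close> by auto
  qed
  then show "strict_descendant A \<rho> w u" using h desc_iff Vl_D[OF u]
    by (simp add: strict_descendant_def)
qed

lemma Sset_eq: "u \<in> Vl \<Longrightarrow> Sset X A \<rho> \<phi> u = {x\<in>X. Up (\<phi> x) = {u}}"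
proof -
  assume u: "u \<in> Vl"
  have "\<And>x. x \<in> X \<Longrightarrow> strict_descendant A \<rho> (\<phi> x) u \<longleftrightarrow> Up (\<phi> x) = {u}"
  proof -
    fix x assume x: "x \<in> X"
    have "lo (\<phi> x)" using r0[OF x] by simp
    then show "strict_descendant A \<rho> (\<phi> x) u \<longleftrightarrow> Up (\<phi> x) = {u}"
      using strict_iff[OF u phiV[OF x]] u by (auto simp: Up_def)
  qed
  then show ?thesis by (auto simp: Sset_def)
qed

lemma Hset_eq: "u \<in> Vl \<Longrightarrow> Hset X A \<rho> \<phi> u = {x\<in>X. u \<in> Up (\<phi> x) \<and> Up (\<phi> x) \<noteq> {u}}"
proof -
  assume u: "u \<in> Vl"
  have "\<And>x. x \<in> X \<Longrightarrow> nonstrict_descendant A \<rho> (\<phi> x) u \<longleftrightarrow> u \<in> Up (\<phi> x) \<and> Up (\<phi> x) \<noteq> {u}"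
  proof -
    fix x assume x: "x \<in> X"
    have "lo (\<phi> x)" using r0[OF x] by simp
    then show "nonstrict_descendant A \<rho> (\<phi> x) u \<longleftrightarrow> u \<in> Up (\<phi> x) \<and> Up (\<phi> x) \<noteq> {u}"
      using strict_iff[OF u phiV[OF x]] desc_iff[of u "\<phi> x"] Vl_D[OF u] u
      unfolding nonstrict_descendant_def by (auto simp: Up_def)
  qed
  then show ?thesis by (auto simp: Hset_def)
qed


end



context RC
begin

lemma drop_mem: "v \<in> set (drop k P) \<Longrightarrow> \<exists>j. k \<le> j \<and> j < length P \<and> P!j = v"
proof -
  assume "v \<in> set (drop k P)"
  then obtain m where "m < length (drop k P)" "drop k P ! m = v" by (auto simp: in_set_conv_nth)
  then show ?thesis by (intro exI[of _ "k + m"]) auto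
qed

lemma not_in_path_before:
  assumes "dpath A P" "(last P, z) \<in> A"
  shows "z \<notin> set P"
proof
  assume "z \<in> set P"
  then have "(z, last P) \<in> A\<^sup>*" using dpath_mem_reach(2)[OF assms(1)] by blast
  then have "(z, z) \<in> A\<^sup>+" using assms(2) by (rule rtrancl_into_trancl1)
  then show False using acyc by blast
qed

lemma Cyc:
  assumes Pa: "dpath A Pa" and Pb: "dpath A Pb" and hh: "hd Pa = hd Pb"
    and az: "(last Pa, z) \<in> A" and bz: "(last Pb, z) \<in> A" and ab: "last Pa \<noteq> last Pb"
  shows "\<exists>ka kb. ka < length Pa \<and> kb < length Pb \<and> Pa!ka = Pb!kb \<and>
     path_arcs (drop ka Pa @ [z]) \<union> path_arcs (drop kb Pb @ [z]) \<in> reticulation_cycles A"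
proof -
  have Pane: "Pa \<noteq> []" and Pbne: "Pb \<noteq> []" using Pa Pb by (auto simp: dpath_def)
  define K where "K = {k. k < length Pa \<and> Pa!k \<in> set Pb}"
  have finK: "finite K" unfolding K_def by simp
  have "0 \<in> K" unfolding K_def using Pane Pbne hh by (simp add: hd_conv_nth[symmetric])
  then have KneE: "K \<noteq> {}" by blast
  define ka where "ka = Max K"
  have "ka \<in> K" unfolding ka_def using finK KneE by (rule Max_in)
  then have ka: "ka < length Pa" "Pa!ka \<in> set Pb" unfolding K_def by auto
  have after: "\<And>j. ka < j \<Longrightarrow> j < length Pa \<Longrightarrow> Pa!j \<notin> set Pb"
  proof
    fix j assume "ka < j" "j < length Pa" "Pa!j \<in> set Pb"
    then have "j \<in> K" unfolding K_def by simp
    then have "j \<le> ka" unfolding ka_def using finK by simp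
    then show False using \<open>ka < j\<close> by simp
  qed
  obtain kb where kb: "kb < length Pb" "Pb!kb = Pa!ka" using ka(2) by (auto simp: in_set_conv_nth)
  define P where "P = drop ka Pa @ [z]"
  define Q where "Q = drop kb Pb @ [z]"
  have dne: "drop ka Pa \<noteq> []" "drop kb Pb \<noteq> []" using ka kb by auto
  have lastd: "last (drop ka Pa) = last Pa" "last (drop kb Pb) = last Pb" using ka kb by auto
  have hdd: "hd (drop ka Pa) = Pa!ka" "hd (drop kb Pb) = Pb!kb" using ka kb by (auto simp: hd_drop_conv_nth)
  have dP: "dpath A P" unfolding P_def
    using dpath_snoc[OF dpath_drop[OF Pa ka(1)]] lastd az by simp
  have dQ: "dpath A Q" unfolding Q_def
    using dpath_snoc[OF dpath_drop[OF Pb kb(1)]] lastd bz by simp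
  have hdP: "hd P = Pa!ka" unfolding P_def using dne hdd by simp
  have hdQ: "hd Q = Pa!ka" unfolding Q_def using dne hdd kb by simp
  have lP: "last P = z" "last Q = z" unfolding P_def Q_def by simp_all
  have PQ: "P \<noteq> Q"
  proof
    assume "P = Q"
    then have "drop ka Pa = drop kb Pb" unfolding P_def Q_def by simp
    then show False using lastd ab by metis
  qed
  have zA: "z \<notin> set Pa" using not_in_path_before[OF Pa az] .
  have zB: "z \<notin> set Pb" using not_in_path_before[OF Pb bz] .
  have inter: "set P \<inter> set Q = {hd P, last P}"
  proof
    show "set P \<inter> set Q \<subseteq> {hd P, last P}"
    proof
      fix v assume v: "v \<in> set P \<inter> set Q"
      show "v \<in> {hd P, last P}"
      proof (cases "v = z")
        case True then show ?thesis using lP by simp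
      next
        case False
        have "v \<in> set (drop ka Pa @ [z])" "v \<in> set (drop kb Pb @ [z])" using v unfolding P_def Q_def by auto
        then have "v \<in> set (drop ka Pa)" "v \<in> set (drop kb Pb)" using False by auto
        then have vB: "v \<in> set Pb" using set_drop_subset[of kb Pb] by blast
        obtain j where j: "ka \<le> j" "j < length Pa" "Pa!j = v" using drop_mem[OF \<open>v \<in> set (drop ka Pa)\<close>] by blast
        have "j = ka" using after[of j] j vB by (cases "ka < j") auto
        then show ?thesis using hdP j by simp
      qed
    qed
  next
    have ne: "P \<noteq> []" "Q \<noteq> []" using dP dQ by (auto simp: dpath_def)
    have "hd P \<in> set P" "last P \<in> set P" using ne by auto
    moreover have "hd Q \<in> set Q" "last Q \<in> set Q" using ne by auto
    then have "hd P \<in> set Q" "last P \<in> set Q" using hdP hdQ lP by auto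
    ultimately show "{hd P, last P} \<subseteq> set P \<inter> set Q" by auto
  qed
  have "path_arcs P \<union> path_arcs Q \<in> reticulation_cycles A"
    unfolding reticulation_cycles_def
    apply (rule CollectI)
    apply (rule exI[of _ P], rule exI[of _ Q])
    using dP dQ PQ hdP hdQ lP inter by simp
  then show ?thesis using ka kb unfolding P_def Q_def by (intro exI[of _ ka] exI[of _ kb]) auto
qed

lemma snoc_arc: "L \<noteq> [] \<Longrightarrow> (last L, z) \<in> path_arcs (L @ [z])"
  by (simp add: path_arcs_snoc)

lemma cons_arc: "L \<noteq> [] \<Longrightarrow> (p, hd L) \<in> path_arcs (p # L)"
  by (cases L) auto

lemma Cyc0:
  assumes "(a,z) \<in> A" "(b,z) \<in> A" "a \<noteq> b"
  shows "\<exists>C\<in>reticulation_cycles A. (a,z) \<in> C \<and> (b,z) \<in> C"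
proof -
  obtain Pa where Pa: "dpath A Pa" "hd Pa = \<rho>" "last Pa = a" using root_path AV assms(1) by blast
  obtain Pb where Pb: "dpath A Pb" "hd Pb = \<rho>" "last Pb = b" using root_path AV assms(2) by blast
  have "\<exists>ka kb. ka < length Pa \<and> kb < length Pb \<and> Pa!ka = Pb!kb \<and>
     path_arcs (drop ka Pa @ [z]) \<union> path_arcs (drop kb Pb @ [z]) \<in> reticulation_cycles A"
    by (rule Cyc[OF Pa(1) Pb(1)]) (use Pa Pb assms in auto)
  then obtain ka kb where k: "ka < length Pa" "kb < length Pb"
    "path_arcs (drop ka Pa @ [z]) \<union> path_arcs (drop kb Pb @ [z]) \<in> reticulation_cycles A"
    by blast
  have "(a,z) \<in> path_arcs (drop ka Pa @ [z])" using snoc_arc[of "drop ka Pa" z] k Pa by simp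
  moreover have "(b,z) \<in> path_arcs (drop kb Pb @ [z])" using snoc_arc[of "drop kb Pb" z] k Pb by simp
  ultimately show ?thesis using k(3) by blast
qed

lemma path_high: "dpath A R \<Longrightarrow> \<not> lo (last R) \<Longrightarrow> v \<in> set R \<Longrightarrow> \<not> lo v"
  using dpath_mem_reach(2) rmono_rt by fastforce

lemma path_low: "dpath A L \<Longrightarrow> lo (hd L) \<Longrightarrow> v \<in> set L \<Longrightarrow> lo v"
  using dpath_mem_reach(1) rmono_rt by fastforce

lemma CoreCyc:
  assumes pu: "(p,u) \<in> A" and pu': "(p',u') \<in> A" and hp: "\<not> lo p" "\<not> lo p'"
    and La: "dpath A La" "hd La = u" and Lb: "dpath A Lb" "hd Lb = u'" and lu: "lo u" "lo u'"
    and dis: "set La \<inter> set Lb = {}" and az: "(last La, z) \<in> A" and bz: "(last Lb, z) \<in> A"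
  shows "\<exists>C\<in>reticulation_cycles A. path_arcs (p # La @ [z]) \<subseteq> C \<and> path_arcs (p' # Lb @ [z]) \<subseteq> C"
proof -
  have Lane: "La \<noteq> []" "Lb \<noteq> []" using La Lb by (auto simp: dpath_def)
  obtain Ru where Ru: "dpath A Ru" "hd Ru = \<rho>" "last Ru = p" using root_path AV pu by blast
  obtain Rv where Rv: "dpath A Rv" "hd Rv = \<rho>" "last Rv = p'" using root_path AV pu' by blast
  have Rne: "Ru \<noteq> []" "Rv \<noteq> []" using Ru Rv by (auto simp: dpath_def)
  define Pa where "Pa = Ru @ La"
  define Pb where "Pb = Rv @ Lb"
  have dPa: "dpath A Pa" unfolding Pa_def using dpath_append[OF Ru(1) La(1)] Ru La pu by simp
  have dPb: "dpath A Pb" unfolding Pb_def using dpath_append[OF Rv(1) Lb(1)] Rv Lb pu' by simp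
  have hh: "hd Pa = hd Pb" unfolding Pa_def Pb_def using Rne Ru Rv by simp
  have lPa: "last Pa = last La" "last Pb = last Lb" unfolding Pa_def Pb_def using Lane by simp_all
  have "last La \<in> set La" "last Lb \<in> set Lb" using Lane by simp_all
  then have neq: "last Pa \<noteq> last Pb" using dis lPa by auto
  have "\<exists>ka kb. ka < length Pa \<and> kb < length Pb \<and> Pa!ka = Pb!kb \<and>
     path_arcs (drop ka Pa @ [z]) \<union> path_arcs (drop kb Pb @ [z]) \<in> reticulation_cycles A"
    by (rule Cyc[OF dPa dPb hh]) (use lPa az bz neq in auto)
  then obtain ka kb where k: "ka < length Pa" "kb < length Pb" "Pa!ka = Pb!kb"
    "path_arcs (drop ka Pa @ [z]) \<union> path_arcs (drop kb Pb @ [z]) \<in> reticulation_cycles A"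
    by blast
  have hiR: "\<And>v. v \<in> set Ru \<Longrightarrow> \<not> lo v" using path_high[OF Ru(1)] Ru(3) hp by blast
  have hiV: "\<And>v. v \<in> set Rv \<Longrightarrow> \<not> lo v" using path_high[OF Rv(1)] Rv(3) hp by blast
  have loA: "\<And>v. v \<in> set La \<Longrightarrow> lo v" using path_low[OF La(1)] La(2) lu by blast
  have loB: "\<And>v. v \<in> set Lb \<Longrightarrow> lo v" using path_low[OF Lb(1)] Lb(2) lu by blast
  have kaR: "ka < length Ru"
  proof (rule ccontr)
    assume "\<not> ka < length Ru"
    then have "Pa!ka = La!(ka - length Ru)" "ka - length Ru < length La"
      using k(1) unfolding Pa_def by (auto simp: nth_append)
    then have inLa: "Pa!ka \<in> set La" by simp
    have "Pb!kb \<in> set Rv \<union> set Lb" using k(2) unfolding Pb_def by (metis nth_mem set_append)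
    then show False using inLa k(3) dis loA hiV by auto
  qed
  have kbR: "kb < length Rv"
  proof (rule ccontr)
    assume "\<not> kb < length Rv"
    then have "Pb!kb = Lb!(kb - length Rv)" "kb - length Rv < length Lb"
      using k(2) unfolding Pb_def by (auto simp: nth_append)
    then have inLb: "Pb!kb \<in> set Lb" by simp
    have "Pa!ka \<in> set Ru" using kaR unfolding Pa_def by (simp add: nth_append)
    then show False using inLb k(3) loB hiR by fastforce
  qed
  have "drop ka Pa = drop ka Ru @ La" unfolding Pa_def using kaR by simp
  moreover obtain R0 where "drop ka Ru = R0 @ [p]"
    using kaR Ru(3) append_butlast_last_id[of "drop ka Ru"] by (metis drop_eq_Nil last_drop not_le)
  ultimately have "drop ka Pa @ [z] = R0 @ (p # La @ [z])" by simp
  then have A1: "path_arcs (p # La @ [z]) \<subseteq> path_arcs (drop ka Pa @ [z])"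
    using path_arcs_suffix by metis
  have "drop kb Pb = drop kb Rv @ Lb" unfolding Pb_def using kbR by simp
  moreover obtain R1 where "drop kb Rv = R1 @ [p']"
    using kbR Rv(3) append_butlast_last_id[of "drop kb Rv"] by (metis drop_eq_Nil last_drop not_le)
  ultimately have "drop kb Pb @ [z] = R1 @ (p' # Lb @ [z])" by simp
  then have A2: "path_arcs (p' # Lb @ [z]) \<subseteq> path_arcs (drop kb Pb @ [z])"
    using path_arcs_suffix by metis
  show ?thesis using k(4) A1 A2 by blast
qed


end



context RC
begin

lemma Merge:
  assumes u: "u \<in> Vl" "u' \<in> Vl" "u \<noteq> u'" and r1: "(u,w) \<in> A\<^sup>*" and r2: "(u',w) \<in> A\<^sup>*"
  shows "\<exists>La Lb z. dpath A La \<and> hd La = u \<and> dpath A Lb \<and> hd Lb = u' \<and> set La \<inter> set Lb = {}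
     \<and> (last La, z) \<in> A \<and> (last Lb, z) \<in> A"
proof -
  obtain L1 where L1: "dpath A L1" "hd L1 = u" "last L1 = w" using rtrancl_dpath[OF r1] by blast
  obtain L2 where L2: "dpath A L2" "hd L2 = u'" "last L2 = w" using rtrancl_dpath[OF r2] by blast
  have ne: "L1 \<noteq> []" "L2 \<noteq> []" using L1 L2 by (auto simp: dpath_def)
  define P where "P = (\<lambda>k. k < length L1 \<and> L1!k \<in> set L2)"
  have "L1!(length L1 - 1) = w" using last_conv_nth[OF ne(1)] L1(3) by simp
  moreover have "w \<in> set L2" using L2(3) ne(2) last_in_set by metis
  ultimately have "P (length L1 - 1)" unfolding P_def using ne by simp
  then have Pk: "P (LEAST k. P k)" by (rule LeastI)
  define k where "k = (LEAST k. P k)"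
  have k: "k < length L1" "L1!k \<in> set L2" using Pk unfolding k_def P_def by auto
  have before: "\<And>j. j < k \<Longrightarrow> L1!j \<notin> set L2"
  proof -
    fix j assume "j < k"
    then have "\<not> P j" unfolding k_def by (rule not_less_Least)
    then show "L1!j \<notin> set L2" unfolding P_def using \<open>j < k\<close> k by auto
  qed
  have k0: "k \<noteq> 0"
  proof
    assume "k = 0"
    then have "u \<in> set L2" using k L1 ne by (simp add: hd_conv_nth)
    then have "(u',u) \<in> A\<^sup>*" using dpath_mem_reach(1)[OF L2(1)] L2 by metis
    then show False using Vl_reach_eq u by metis
  qed
  obtain m where m: "m < length L2" "L2!m = L1!k" using k by (auto simp: in_set_conv_nth)
  have m0: "m \<noteq> 0"
  proof
    assume "m = 0"
    then have "u' \<in> set L1" using m k L2 ne by (metis hd_conv_nth nth_mem)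
    then have "(u,u') \<in> A\<^sup>*" using dpath_mem_reach(1)[OF L1(1)] L1 by metis
    then show False using Vl_reach_eq u by metis
  qed
  define La where "La = take k L1"
  define Lb where "Lb = take m L2"
  have dLa: "dpath A La" unfolding La_def using dpath_take[OF L1(1)] k0 by simp
  have dLb: "dpath A Lb" unfolding Lb_def using dpath_take[OF L2(1)] m0 by simp
  have hLa: "hd La = u" unfolding La_def using k0 L1 ne by simp
  have hLb: "hd Lb = u'" unfolding Lb_def using m0 L2 ne by simp
  have lLa: "last La = L1!(k - 1)" unfolding La_def by (subst last_conv_nth) (use k0 k in auto)
  have lLb: "last Lb = L2!(m - 1)" unfolding Lb_def by (subst last_conv_nth) (use m0 m in auto)
  have aA: "(last La, L1!k) \<in> A" using lLa dpath_nth_arc[OF L1(1), of "k - 1"] k k0 by simp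
  have bA: "(last Lb, L1!k) \<in> A" using lLb dpath_nth_arc[OF L2(1), of "m - 1"] m m0 by simp
  have dis: "set La \<inter> set Lb = {}"
  proof (rule ccontr)
    assume "set La \<inter> set Lb \<noteq> {}"
    then obtain v where "v \<in> set La" "v \<in> set Lb" by blast
    then obtain j where "j < k" "L1!j = v" using k unfolding La_def by (auto simp: in_set_conv_nth)
    moreover have "v \<in> set L2" using \<open>v \<in> set Lb\<close> unfolding Lb_def by (meson in_set_takeD)
    ultimately show False using before by blast
  qed
  show ?thesis using dLa hLa dLb hLb dis aA bA by blast
qed

lemma crossing:
  assumes P: "dpath A P" and e1: "(a,b) \<in> path_arcs P" and e2: "(a',b') \<in> path_arcs P"
    and h: "\<not> lo a" "lo b" "\<not> lo a'" "lo b'"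
  shows "b = b'"
proof -
  obtain j where j: "Suc j < length P" "P!j = a" "P!Suc j = b" using e1 mem_path_arcs by metis
  obtain k where k: "Suc k < length P" "P!k = a'" "P!Suc k = b'" using e2 mem_path_arcs by metis
  have "\<not> j < k"
  proof
    assume "j < k"
    then have "(P!Suc j, P!k) \<in> A\<^sup>*" using dpath_nth_rtrancl[OF P, of "Suc j" k] k by simp
    then have "r (P!k) \<le> r (P!Suc j)" by (rule rmono_rt)
    then show False using h j k by simp
  qed
  moreover have "\<not> k < j"
  proof
    assume "k < j"
    then have "(P!Suc k, P!j) \<in> A\<^sup>*" using dpath_nth_rtrancl[OF P, of "Suc k" j] j by simp
    then have "r (P!j) \<le> r (P!Suc k)" by (rule rmono_rt)
    then show False using h j k by simp
  qed
  ultimately show ?thesis using j k by simp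
qed

lemma pred_unique:
  assumes "distinct P" "(a,v) \<in> path_arcs P" "(b,v) \<in> path_arcs P"
  shows "a = b"
proof -
  obtain j where j: "Suc j < length P" "P!j = a" "P!Suc j = v" using assms(2) mem_path_arcs by metis
  obtain k where k: "Suc k < length P" "P!k = b" "P!Suc k = v" using assms(3) mem_path_arcs by metis
  have "Suc j = Suc k" using nth_eq_iff_index_eq[OF assms(1), of "Suc j" "Suc k"] j k by simp
  then show ?thesis using j k by simp
qed

lemma target_nonhd:
  assumes "distinct P" "(a,v) \<in> path_arcs P"
  shows "v \<in> set P" "v \<noteq> hd P"
proof -
  obtain j where j: "Suc j < length P" "P!j = a" "P!Suc j = v" using assms(2) mem_path_arcs by metis
  show "v \<in> set P" using j by (metis Suc_lessD nth_mem)
  have ne: "P \<noteq> []" using j(1) by (cases P) simp_all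
  have h0: "hd P = P!0" using ne by (simp add: hd_conv_nth)
  have l0: "0 < length P" using j(1) by linarith
  have d: "P!Suc j \<noteq> P!0" using nth_eq_iff_index_eq[OF assms(1) _ l0, of "Suc j"] j by auto
  show "v \<noteq> hd P" using h0 d j by simp
qed

lemma cyc_rep:
  assumes "C \<in> reticulation_cycles A"
  obtains P Q where "C = path_arcs P \<union> path_arcs Q" "dpath A P" "dpath A Q" "P \<noteq> Q"
    "hd P = hd Q" "last P = last Q" "set P \<inter> set Q = {hd P, last P}"
  using assms unfolding reticulation_cycles_def by blast

lemma cyc_indeg:
  assumes "C \<in> reticulation_cycles A"
  shows "\<exists>z. \<forall>v a b. (a,v) \<in> C \<longrightarrow> (b,v) \<in> C \<longrightarrow> a \<noteq> b \<longrightarrow> v = z"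
proof -
  obtain P Q where PQ: "C = path_arcs P \<union> path_arcs Q" "dpath A P" "dpath A Q"
    "hd P = hd Q" "last P = last Q" "set P \<inter> set Q = {hd P, last P}"
    using cyc_rep[OF assms] by metis
  have dist: "distinct P" "distinct Q" using dpath_distinct acyc PQ by auto
  have key: "\<And>v a b. (a,v) \<in> path_arcs P \<Longrightarrow> (b,v) \<in> path_arcs Q \<Longrightarrow> v = last P"
  proof -
    fix v a b assume "(a,v) \<in> path_arcs P" "(b,v) \<in> path_arcs Q"
    then have "v \<in> set P" "v \<noteq> hd P" "v \<in> set Q" using target_nonhd dist by metis+
    then show "v = last P" using PQ(6) by blast
  qed
  have "\<forall>v a b. (a,v) \<in> C \<longrightarrow> (b,v) \<in> C \<longrightarrow> a \<noteq> b \<longrightarrow> v = last P"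
  proof (intro allI impI)
    fix v a b assume "(a,v) \<in> C" "(b,v) \<in> C" "a \<noteq> b"
    then consider "(a,v) \<in> path_arcs P" "(b,v) \<in> path_arcs P" | "(a,v) \<in> path_arcs P" "(b,v) \<in> path_arcs Q"
      | "(a,v) \<in> path_arcs Q" "(b,v) \<in> path_arcs P" | "(a,v) \<in> path_arcs Q" "(b,v) \<in> path_arcs Q"
      using PQ(1) by blast
    then show "v = last P"
    proof cases
      case 1 then show ?thesis using pred_unique dist \<open>a \<noteq> b\<close> by metis
    next
      case 2 then show ?thesis using key by metis
    next
      case 3 then show ?thesis using key by metis
    next
      case 4 then show ?thesis using pred_unique dist \<open>a \<noteq> b\<close> by metis
    qed
  qed
  then show ?thesis by blast
qed

lemma cyc_cross_two:
  assumes "C \<in> reticulation_cycles A"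
    and "(a1,b1) \<in> C" "(a2,b2) \<in> C" "(a3,b3) \<in> C"
    and "\<not> lo a1" "\<not> lo a2" "\<not> lo a3" "lo b1" "lo b2" "lo b3"
  shows "b1 = b2 \<or> b1 = b3 \<or> b2 = b3"
proof -
  obtain P Q where PQ: "C = path_arcs P \<union> path_arcs Q" "dpath A P" "dpath A Q"
    using cyc_rep[OF assms(1)] by metis
  have cP: "\<And>a b a' b'. (a,b) \<in> path_arcs P \<Longrightarrow> (a',b') \<in> path_arcs P \<Longrightarrow> \<not> lo a \<Longrightarrow> lo b \<Longrightarrow> \<not> lo a' \<Longrightarrow> lo b' \<Longrightarrow> b = b'"
    using crossing[OF PQ(2)] by blast
  have cQ: "\<And>a b a' b'. (a,b) \<in> path_arcs Q \<Longrightarrow> (a',b') \<in> path_arcs Q \<Longrightarrow> \<not> lo a \<Longrightarrow> lo b \<Longrightarrow> \<not> lo a' \<Longrightarrow> lo b' \<Longrightarrow> b = b'"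
    using crossing[OF PQ(3)] by blast
  have "(a1,b1) \<in> path_arcs P \<or> (a1,b1) \<in> path_arcs Q" "(a2,b2) \<in> path_arcs P \<or> (a2,b2) \<in> path_arcs Q"
    "(a3,b3) \<in> path_arcs P \<or> (a3,b3) \<in> path_arcs Q" using assms(2-4) PQ(1) by auto
  then show ?thesis using cP[of a1 b1 a2 b2] cP[of a1 b1 a3 b3] cP[of a2 b2 a3 b3]
     cQ[of a1 b1 a2 b2] cQ[of a1 b1 a3 b3] cQ[of a2 b2 a3 b3] assms(5-10) by blast
qed

lemma high_parent: "u \<in> Vl \<Longrightarrow> \<rho> \<notin> Vl \<Longrightarrow> \<exists>p. (p,u) \<in> A \<and> \<not> lo p"
  using Vl_parent by metis

lemma pair_cycle:
  assumes u: "u \<in> Vl" "u' \<in> Vl" "u \<noteq> u'" and "(u,w) \<in> A\<^sup>*" "(u',w) \<in> A\<^sup>*"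
    and p: "(p,u) \<in> A" "\<not> lo p" and p': "(p',u') \<in> A" "\<not> lo p'"
  shows "\<exists>C\<in>reticulation_cycles A. (p,u) \<in> C \<and> (p',u') \<in> C"
proof -
  obtain La Lb z where L: "dpath A La" "hd La = u" "dpath A Lb" "hd Lb = u'" "set La \<inter> set Lb = {}"
     "(last La, z) \<in> A" "(last Lb, z) \<in> A" using Merge[OF u assms(4,5)] by blast
  have ne: "La \<noteq> []" "Lb \<noteq> []" using L by (auto simp: dpath_def)
  have "lo u" "lo u'" using Vl_D u by auto
  then obtain C where C: "C \<in> reticulation_cycles A" "path_arcs (p # La @ [z]) \<subseteq> C"
    "path_arcs (p' # Lb @ [z]) \<subseteq> C"
    using CoreCyc[OF p(1) p'(1) p(2) p'(2) L(1,2) L(3,4)] L(5-7) by blast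
  have "(p,u) \<in> path_arcs (p # La @ [z])" using cons_arc[of "La @ [z]" p] ne L(2) by simp
  moreover have "(p',u') \<in> path_arcs (p' # Lb @ [z])" using cons_arc[of "Lb @ [z]" p'] ne L(4) by simp
  ultimately show ?thesis using C by blast
qed

lemma Triple:
  assumes u: "u \<in> Vl" "u1 \<in> Vl" "u2 \<in> Vl" "u \<noteq> u1" "u \<noteq> u2" "u1 \<noteq> u2"
    and "(u,w1) \<in> A\<^sup>*" "(u1,w1) \<in> A\<^sup>*" "(u,w2) \<in> A\<^sup>*" "(u2,w2) \<in> A\<^sup>*"
  shows False
proof -
  have nr: "\<rho> \<notin> Vl" using Vl_rho u by metis
  obtain p where p: "(p,u) \<in> A" "\<not> lo p" using high_parent[OF u(1) nr] by blast
  obtain p1 where p1: "(p1,u1) \<in> A" "\<not> lo p1" using high_parent[OF u(2) nr] by blast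
  obtain p2 where p2: "(p2,u2) \<in> A" "\<not> lo p2" using high_parent[OF u(3) nr] by blast
  obtain C1 where C1: "C1 \<in> reticulation_cycles A" "(p,u) \<in> C1" "(p1,u1) \<in> C1"
    using pair_cycle[OF u(1,2,4) assms(7,8) p p1] by blast
  obtain C2 where C2: "C2 \<in> reticulation_cycles A" "(p,u) \<in> C2" "(p2,u2) \<in> C2"
    using pair_cycle[OF u(1,3,5) assms(9,10) p p2] by blast
  have "C1 = C2" using cact[OF C1(1) C2(1) C1(2) C2(2)] .
  then have "u = u1 \<or> u = u2 \<or> u1 = u2"
    using cyc_cross_two[OF C1(1) C1(2) C1(3), of p2 u2] C2(3) p p1 p2 Vl_D u by auto
  then show False using u by blast
qed


end



context RC
begin

lemma L3:
  assumes u: "u \<in> Vl"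
  shows "\<exists>x\<in>X. Up (\<phi> x) = {u}"
proof (cases "\<rho> \<in> Vl")
  case True
  have "X \<noteq> {}" using basics(8) .
  then obtain x where x: "x \<in> X" by auto
  have ur: "u = \<rho>" using Vl_rho[OF True u] .
  have "Up (\<phi> x) = {u}"
  proof
    show "Up (\<phi> x) \<subseteq> {u}"
    proof
      fix v assume "v \<in> Up (\<phi> x)"
      then have "v \<in> Vl" by (simp add: Up_def)
      then show "v \<in> {u}" using Vl_rho[OF True] ur by simp
    qed
    have "(\<rho>, \<phi> x) \<in> A\<^sup>*" using reach phiV x by blast
    then show "{u} \<subseteq> Up (\<phi> x)" using u ur by (simp add: Up_def)
  qed
  then show ?thesis using x by blast
next
  case nrho: False
  obtain p where p: "(p,u) \<in> A" "\<not> lo p" using high_parent[OF u nrho] by blast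
  define D where "D = {v \<in> V. (u,v) \<in> A\<^sup>* \<and> Up v = {u}}"
  have uV: "u \<in> V" "lo u" using Vl_D u by auto
  have Upu: "Up u = {u}"
  proof
    show "Up u \<subseteq> {u}" using Vl_reach_eq u by (auto simp: Up_def)
    show "{u} \<subseteq> Up u" using u by (simp add: Up_def)
  qed
  have "u \<in> D" using uV Upu by (simp add: D_def)
  have finA: "finite A" using finite_subset[OF basics(2)] finV by blast
  have wf: "wf (A\<inverse>)" using finite_acyclic_wf_converse[OF finA] acyc by (simp add: acyclic_def)
  obtain w where w: "w \<in> D" and wmin: "\<And>y. (y,w) \<in> A\<inverse> \<Longrightarrow> y \<notin> D"
    using wfE_min[OF wf \<open>u \<in> D\<close>] by metis
  from w have wV: "w \<in> V" and uw: "(u,w) \<in> A\<^sup>*" and Upw: "Up w = {u}" by (auto simp: D_def)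
  have lw: "lo w" using rmono_rt[OF uw] uV by linarith
  show ?thesis
  proof (rule ccontr)
    assume nx: "\<not> (\<exists>x\<in>X. Up (\<phi> x) = {u})"
    have wnX: "w \<notin> \<phi> ` X" using nx Upw by auto
    obtain La where La: "dpath A La" "hd La = u" "last La = w" using rtrancl_dpath[OF uw] by blast
    have Lane: "La \<noteq> []" using La by (simp add: dpath_def)
    have child: "\<And>c. (w,c) \<in> A \<Longrightarrow> \<exists>C\<in>reticulation_cycles A. (p,u) \<in> C \<and> (w,c) \<in> C \<and>
        path_arcs La \<subseteq> C \<and> (\<exists>q. q \<noteq> w \<and> (q,c) \<in> C)"
    proof -
      fix c assume wc: "(w,c) \<in> A"
      have cV: "c \<in> V" using AV wc by blast
      have uc: "(u,c) \<in> A\<^sup>*" using uw wc by (rule rtrancl_into_rtrancl)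
      have "c \<notin> D" using wmin wc by auto
      then have "Up c \<noteq> {u}" using cV uc by (simp add: D_def)
      moreover have "u \<in> Up c" using u uc by (simp add: Up_def)
      ultimately obtain u' where u': "u' \<in> Up c" "u' \<noteq> u" by blast
      then have u'V: "u' \<in> Vl" "(u',c) \<in> A\<^sup>*" by (auto simp: Up_def)
      have "u' \<noteq> c"
      proof
        assume "u' = c"
        then have "\<not> lo w" using Vl_D u'V(1) wc by (auto simp: parents_def)
        then show False using lw by simp
      qed
      then obtain q where q1: "(u',q) \<in> A\<^sup>*" "(q,c) \<in> A" using u'V(2) by (auto elim: rtranclE)
      have "q \<noteq> w"
      proof
        assume "q = w"
        then have "u' \<in> Up w" using u'V q1 by (simp add: Up_def)
        then show False using Upw u'(2) by simp
      qed
      obtain Lb where Lb: "dpath A Lb" "hd Lb = u'" "last Lb = q" using rtrancl_dpath[OF q1(1)] by blast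
      have Lbne: "Lb \<noteq> []" using Lb by (simp add: dpath_def)
      have dis: "set La \<inter> set Lb = {}"
      proof (rule ccontr)
        assume "set La \<inter> set Lb \<noteq> {}"
        then obtain v where v: "v \<in> set La" "v \<in> set Lb" by blast
        have "(v,w) \<in> A\<^sup>*" using dpath_mem_reach(2)[OF La(1) v(1)] La(3) by simp
        moreover have "(u',v) \<in> A\<^sup>*" using dpath_mem_reach(1)[OF Lb(1) v(2)] Lb(2) by simp
        ultimately have "(u',w) \<in> A\<^sup>*" by simp
        then have "u' \<in> Up w" using u'V(1) by (simp add: Up_def)
        then show False using Upw u'(2) by simp
      qed
      obtain p' where p': "(p',u') \<in> A" "\<not> lo p'" using high_parent[OF u'V(1) nrho] by blast
      have "lo u'" using Vl_D u'V by auto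
      have "\<exists>C\<in>reticulation_cycles A. path_arcs (p # La @ [c]) \<subseteq> C \<and> path_arcs (p' # Lb @ [c]) \<subseteq> C"
        by (rule CoreCyc[OF p(1) p'(1) p(2) p'(2) La(1,2) Lb(1,2) uV(2) \<open>lo u'\<close> dis])
           (use La(3) Lb(3) wc q1(2) in auto)
      then obtain C where C: "C \<in> reticulation_cycles A" "path_arcs (p # La @ [c]) \<subseteq> C"
        "path_arcs (p' # Lb @ [c]) \<subseteq> C" by blast
      have s1: "path_arcs (La @ [c]) \<subseteq> C" using path_arcs_suffix[of "La @ [c]" "[p]"] C(2) by simp
      have s2: "path_arcs (Lb @ [c]) \<subseteq> C" using path_arcs_suffix[of "Lb @ [c]" "[p']"] C(3) by simp
      have "(p,u) \<in> C" using cons_arc[of "La @ [c]" p] La(2) C(2) Lane by auto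
      moreover have "(w,c) \<in> C" using snoc_arc[OF Lane, of c] La(3) s1 by auto
      moreover have "(q,c) \<in> C" using snoc_arc[OF Lbne, of c] Lb(3) s2 by auto
      moreover have "path_arcs La \<subseteq> C" using path_arcs_prefix[of La "[c]"] s1 by simp
      ultimately show "\<exists>C\<in>reticulation_cycles A. (p,u) \<in> C \<and> (w,c) \<in> C \<and>
        path_arcs La \<subseteq> C \<and> (\<exists>q. q \<noteq> w \<and> (q,c) \<in> C)" using \<open>q \<noteq> w\<close> C(1) by blast
    qed
    have nleaf: "\<not> is_leaf A w" using basics(11) wV wnX by blast
    then have chne: "children A w \<noteq> {}" using children_fin[of w] by (auto simp: is_leaf_def outdeg_def)
    show False
    proof (cases "is_reticulation A w")
      case False
      have "outdeg A w \<noteq> 1" using basics(12) wV wnX False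
        by (auto simp: is_tree_vertex_def is_reticulation_def)
      moreover have "outdeg A w \<noteq> 0" using chne children_fin[of w] by (simp add: outdeg_def)
      ultimately have "\<not> card (children A w) \<le> Suc 0" by (simp add: outdeg_def)
      then obtain c1 c2 where c: "c1 \<in> children A w" "c2 \<in> children A w" "c1 \<noteq> c2"
        using card_le_Suc0_iff_eq[OF children_fin[of w]] by blast
      obtain C1 q1 where C1: "C1 \<in> reticulation_cycles A" "(p,u) \<in> C1" "(w,c1) \<in> C1" "q1 \<noteq> w" "(q1,c1) \<in> C1"
        using child[of c1] c(1) by (auto simp: children_def)
      obtain C2 q2 where C2: "C2 \<in> reticulation_cycles A" "(p,u) \<in> C2" "(w,c2) \<in> C2" "q2 \<noteq> w" "(q2,c2) \<in> C2"
        using child[of c2] c(2) by (auto simp: children_def)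
      have "C1 = C2" using cact[OF C1(1) C2(1) C1(2) C2(2)] .
      obtain z where z: "\<forall>v a b. (a,v) \<in> C1 \<longrightarrow> (b,v) \<in> C1 \<longrightarrow> a \<noteq> b \<longrightarrow> v = z"
        using cyc_indeg[OF C1(1)] by blast
      have "c1 = z" using z C1(3,4,5) by blast
      moreover have "c2 = z" using z C2(3,4,5) \<open>C1 = C2\<close> by blast
      ultimately show False using c(3) by simp
    next
      case True
      obtain c1 where wc1: "(w,c1) \<in> A" using chne by (auto simp: children_def)
      obtain C1 q1 where C1: "C1 \<in> reticulation_cycles A" "(w,c1) \<in> C1" "path_arcs La \<subseteq> C1"
        "q1 \<noteq> w" "(q1,c1) \<in> C1"
        using child[OF wc1] by blast
      have "u \<noteq> w" using Vl_not_ret u True by blast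
      define L0 where "L0 = butlast La"
      have La0: "La = L0 @ [w]" unfolding L0_def using append_butlast_last_id[OF Lane] La(3) by metis
      have L0ne: "L0 \<noteq> []"
      proof
        assume "L0 = []"
        then have "La = [w]" using La0 by simp
        then show False using La(2) \<open>u \<noteq> w\<close> by simp
      qed
      define a' where "a' = last L0"
      have aw: "(a',w) \<in> path_arcs La" unfolding a'_def La0 using snoc_arc[OF L0ne] .
      then have awA: "(a',w) \<in> A" using La(1) by (auto simp: dpath_def)
      then have "a' \<in> parents A w" by (simp add: parents_def)
      then obtain b where b: "b \<in> parents A w" "b \<noteq> a'" using ret_other_parent[OF True] by blast
      obtain Cw where Cw: "Cw \<in> reticulation_cycles A" "(a',w) \<in> Cw" "(b,w) \<in> Cw"
        using Cyc0[OF awA, of b] b by (auto simp: parents_def)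
      have "(a',w) \<in> C1" using aw C1(3) by blast
      then have "C1 = Cw" using cact[OF C1(1) Cw(1)] Cw(2) by blast
      obtain z where z: "\<forall>v a b. (a,v) \<in> C1 \<longrightarrow> (b,v) \<in> C1 \<longrightarrow> a \<noteq> b \<longrightarrow> v = z"
        using cyc_indeg[OF C1(1)] by blast
      have "w = z" using z Cw(2,3) b(2) \<open>C1 = Cw\<close> by blast
      moreover have "c1 = z" using z C1(2,4,5) by blast
      ultimately have "(w,w) \<in> A" using wc1 by simp
      then show False using acyc by blast
    qed
  qed
qed


abbreviation SS where "SS \<equiv> Ssys X V A \<rho> \<phi> r i"
abbreviation Sx where "Sx u \<equiv> Sset X A \<rho> \<phi> u"
abbreviation Hx where "Hx u \<equiv> Hset X A \<rho> \<phi> u"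
abbreviation U where "U x \<equiv> Up (\<phi> x)"

lemma F1: "x \<in> X \<Longrightarrow> U x \<noteq> {}"
  using Up_ne[OF phiV] r0 by simp

lemma UVl: "v \<in> U x \<Longrightarrow> v \<in> Vl \<and> (v, \<phi> x) \<in> A\<^sup>*"
  by (simp add: Up_def)

lemma F4a:
  assumes "u \<in> U x" "u1 \<in> U x" "u \<noteq> u1"
  shows "U x = {u,u1}"
proof
  show "{u,u1} \<subseteq> U x" using assms by simp
  show "U x \<subseteq> {u,u1}"
  proof
    fix v assume v: "v \<in> U x"
    show "v \<in> {u,u1}"
    proof (rule ccontr)
      assume "v \<notin> {u,u1}"
      then have "v \<noteq> u" "v \<noteq> u1" by auto
      then show False using Triple[of u u1 v "\<phi> x" "\<phi> x"] UVl[OF v] UVl[OF assms(1)] UVl[OF assms(2)] assms(3)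
        by auto
    qed
  qed
qed

lemma other_elem: "u \<in> S \<Longrightarrow> S \<noteq> {u} \<Longrightarrow> \<exists>u1\<in>S. u1 \<noteq> u"
  by blast

lemma F4:
  assumes "u \<in> U x" "u \<in> U y" "U x \<noteq> {u}" "U y \<noteq> {u}"
  shows "U x = U y"
proof -
  obtain u1 where u1: "u1 \<in> U x" "u1 \<noteq> u" using other_elem[OF assms(1,3)] by blast
  obtain u2 where u2: "u2 \<in> U y" "u2 \<noteq> u" using other_elem[OF assms(2,4)] by blast
  have "u1 = u2"
  proof (rule ccontr)
    assume "u1 \<noteq> u2"
    then show False using Triple[of u u1 u2 "\<phi> x" "\<phi> y"] UVl[OF u1(1)] UVl[OF u2(1)]
      UVl[OF assms(1)] UVl[OF assms(2)] u1(2) u2(2) by auto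
  qed
  then show ?thesis using F4a[OF assms(1) u1(1)] F4a[OF assms(2) u2(1)] u1 u2 by simp
qed

definition cls where "cls x = {y\<in>X. U y = U x}"

lemma BS: "u \<in> Vl \<Longrightarrow> x \<in> Sx u \<Longrightarrow> Sx u = cls x"
  by (auto simp: Sset_eq cls_def)

lemma BH: "u \<in> Vl \<Longrightarrow> x \<in> Hx u \<Longrightarrow> Hx u = cls x"
proof -
  assume u: "u \<in> Vl" and x: "x \<in> Hx u"
  then have xx: "x \<in> X" "u \<in> U x" "U x \<noteq> {u}" by (auto simp: Hset_eq)
  show "Hx u = cls x"
  proof
    show "Hx u \<subseteq> cls x"
    proof
      fix y assume "y \<in> Hx u"
      then have "y \<in> X" "u \<in> U y" "U y \<noteq> {u}" using u by (auto simp: Hset_eq)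
      then show "y \<in> cls x" using F4[of u y x] xx by (auto simp: cls_def)
    qed
    show "cls x \<subseteq> Hx u" using xx u by (auto simp: cls_def Hset_eq)
  qed
qed

lemma SSmem: "a \<in> SS \<longleftrightarrow> (\<exists>u\<in>Vl. a = (Sx u, Hx u)) \<or> (\<exists>u\<in>Vl. Hx u \<noteq> {} \<and> a = (Hx u, {}))"
  by (auto simp: Ssys_def)

lemma Sne: "u \<in> Vl \<Longrightarrow> Sx u \<noteq> {}"
  using L3 Sset_eq by force

lemma Ssub: "Sx u \<subseteq> X" by (auto simp: Sset_def)
lemma Hsub: "Hx u \<subseteq> X" by (auto simp: Hset_def)

lemma blocks:
  assumes "B \<in> fst ` SS"
  shows "B \<noteq> {} \<and> B \<subseteq> X \<and> (\<forall>x\<in>B. B = cls x)"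
proof -
  obtain a where a: "a \<in> SS" "B = fst a" using assms by blast
  from a(1) consider u where "u \<in> Vl" "a = (Sx u, Hx u)" | u where "u \<in> Vl" "Hx u \<noteq> {}" "a = (Hx u, {})"
    unfolding SSmem by blast
  then show ?thesis
  proof cases
    case 1 then show ?thesis using a(2) Sne Ssub BS by simp
  next
    case 2 then show ?thesis using a(2) Hsub BH by simp
  qed
qed

lemma polestar: "polestar_system X SS"
  unfolding polestar_system_def
proof (intro conjI)
  show "set_pair_system X SS"
    unfolding set_pair_system_def
  proof
    fix a assume "a \<in> SS"
    then consider u where "u \<in> Vl" "a = (Sx u, Hx u)" | u where "u \<in> Vl" "Hx u \<noteq> {}" "a = (Hx u, {})"
      unfolding SSmem by blast
    then show "case a of (S, H) \<Rightarrow> S \<subseteq> X \<and> H \<subseteq> X \<and> S \<noteq> {} \<and> S \<inter> H = {}"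
    proof cases
      case 1
      have "Sx u \<inter> Hx u = {}" using 1(1) by (auto simp: Sset_eq Hset_eq)
      then show ?thesis using 1 Ssub Hsub Sne by simp
    next
      case 2
      then show ?thesis using Hsub by simp
    qed
  qed
next
  show "partition_on X (fst ` SS)"
    unfolding partition_on_def
  proof (intro conjI)
    show "\<Union> (fst ` SS) = X"
    proof
      show "\<Union> (fst ` SS) \<subseteq> X" using blocks by blast
      show "X \<subseteq> \<Union> (fst ` SS)"
      proof
        fix x assume x: "x \<in> X"
        obtain u where u: "u \<in> U x" using F1[OF x] by blast
        then have uV: "u \<in> Vl" using UVl by blast
        show "x \<in> \<Union> (fst ` SS)"
        proof (cases "U x = {u}")
          case True
          then have "x \<in> Sx u" using x uV by (simp add: Sset_eq)
          moreover have "(Sx u, Hx u) \<in> SS" using uV unfolding SSmem by blast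
          ultimately show ?thesis by force
        next
          case False
          then have "x \<in> Hx u" using x uV u by (simp add: Hset_eq)
          moreover have "(Hx u, {}) \<in> SS" using uV \<open>x \<in> Hx u\<close> by (auto simp: SSmem)
          ultimately show ?thesis by force
        qed
      qed
    qed
    show "disjoint (fst ` SS)"
      unfolding pairwise_def disjnt_def
    proof (intro ballI impI)
      fix B1 B2 assume B: "B1 \<in> fst ` SS" "B2 \<in> fst ` SS" "B1 \<noteq> B2"
      show "B1 \<inter> B2 = {}"
      proof (rule ccontr)
        assume "B1 \<inter> B2 \<noteq> {}"
        then obtain x where "x \<in> B1" "x \<in> B2" by blast
        then have "B1 = cls x" "B2 = cls x" using blocks B(1,2) by blast+
        then show False using B(3) by simp
      qed
    qed
    show "{} \<notin> fst ` SS" using blocks by blast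
  qed
next
  show "\<forall>a\<in>SS. \<forall>b\<in>SS. a \<noteq> b \<longrightarrow> fst a \<noteq> fst b"
  proof (intro ballI impI)
    fix a b assume a: "a \<in> SS" and b: "b \<in> SS" and ab: "a \<noteq> b"
    show "fst a \<noteq> fst b"
    proof
      assume eq: "fst a = fst b"
      have "fst a \<noteq> {}" using blocks a by blast
      then obtain x where xa: "x \<in> fst a" by blast
      then have xb: "x \<in> fst b" using eq by simp
      from a consider u where "u \<in> Vl" "a = (Sx u, Hx u)" | u where "u \<in> Vl" "Hx u \<noteq> {}" "a = (Hx u, {})"
        unfolding SSmem by blast
      then show False
      proof cases
        case 1
        note A1 = 1
        from b consider v where "v \<in> Vl" "b = (Sx v, Hx v)" | v where "v \<in> Vl" "Hx v \<noteq> {}" "b = (Hx v, {})"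
          unfolding SSmem by blast
        then show False
        proof cases
          case 1
          have "U x = {u}" "U x = {v}" using xa xb A1 1 by (auto simp: Sset_eq)
          then show False using ab A1 1 by simp
        next
          case 2
          have "U x = {u}" "v \<in> U x" "U x \<noteq> {v}" using xa xb A1 2 by (auto simp: Sset_eq Hset_eq)
          then show False by simp
        qed
      next
        case 2
        note A2 = 2
        from b consider v where "v \<in> Vl" "b = (Sx v, Hx v)" | v where "v \<in> Vl" "Hx v \<noteq> {}" "b = (Hx v, {})"
          unfolding SSmem by blast
        then show False
        proof cases
          case 1
          have "U x = {v}" "u \<in> U x" "U x \<noteq> {u}" using xa xb 1 A2 by (auto simp: Sset_eq Hset_eq)
          then show False by simp
        next
          case 2
          then show False using eq ab A2 by simp
        qed
      qed
    qed
  qed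
next
  show "\<forall>(S, H)\<in>SS. H \<noteq> {} \<longrightarrow> (H, {}) \<in> SS \<and> (\<exists>!(S', H')\<in>SS. (S', H') \<noteq> (S, H) \<and> H' = H)"
  proof
    fix a assume a: "a \<in> SS"
    obtain S H where aSH: "a = (S, H)" by (cases a)
    have "H \<noteq> {} \<Longrightarrow> (H, {}) \<in> SS \<and> (\<exists>!(S', H')\<in>SS. (S', H') \<noteq> (S, H) \<and> H' = H)"
    proof -
      assume Hne: "H \<noteq> {}"
      from a consider u where "u \<in> Vl" "a = (Sx u, Hx u)" | u where "u \<in> Vl" "Hx u \<noteq> {}" "a = (Hx u, {})"
        unfolding SSmem by blast
      then obtain u where u: "u \<in> Vl" "S = Sx u" "H = Hx u"
        using aSH Hne by (cases) auto
      have H1: "(H, {}) \<in> SS" using u Hne by (auto simp: SSmem)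
      obtain x where x: "x \<in> Hx u" using Hne u by blast
      then have xx: "x \<in> X" "u \<in> U x" "U x \<noteq> {u}" using u by (auto simp: Hset_eq)
      obtain u1 where u1: "u1 \<in> U x" "u1 \<noteq> u" using other_elem[OF xx(2,3)] by blast
      have Ux: "U x = {u, u1}" using F4a[OF xx(2) u1(1) u1(2)[symmetric]] .
      have u1V: "u1 \<in> Vl" using UVl u1 by blast
      have xH1: "x \<in> Hx u1" using xx Ux u1 u1V by (auto simp: Hset_eq)
      have HH: "Hx u1 = Hx u" using BH[OF u1V xH1] BH[OF u(1) x] by simp
      have SS1: "(Sx u1, Hx u1) \<in> SS" using u1V unfolding SSmem by blast
      have Sdiff: "Sx u1 \<noteq> Sx u"
      proof
        assume "Sx u1 = Sx u"
        obtain y where "y \<in> Sx u" using Sne[OF u(1)] by blast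
        then have "U y = {u}" "U y = {u1}" using \<open>Sx u1 = Sx u\<close> u(1) u1V by (auto simp: Sset_eq)
        then show False using u1(2) by simp
      qed
      have "\<exists>!(S', H')\<in>SS. (S', H') \<noteq> (S, H) \<and> H' = H"
      proof (rule ex1I[of _ "(Sx u1, Hx u1)"])
        show "case (Sx u1, Hx u1) of (S', H') \<Rightarrow> (S', H') \<in> SS \<and> (S', H') \<noteq> (S, H) \<and> H' = H"
          using SS1 Sdiff HH u by simp
      next
        fix b assume bh: "case b of (S', H') \<Rightarrow> (S', H') \<in> SS \<and> (S', H') \<noteq> (S, H) \<and> H' = H"
        obtain S' H' where bSH: "b = (S', H')" by (cases b)
        then have b: "(S', H') \<in> SS" "(S', H') \<noteq> (S, H)" "H' = H" using bh by auto
        from b(1) consider w where "w \<in> Vl" "(S', H') = (Sx w, Hx w)"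
          | w where "w \<in> Vl" "Hx w \<noteq> {}" "(S', H') = (Hx w, {})"
          unfolding SSmem by blast
        then show "b = (Sx u1, Hx u1)"
        proof cases
          case 1
          then have "x \<in> Hx w" using b(3) u x by simp
          then have "w \<in> U x" using 1(1) by (simp add: Hset_eq)
          then have "w = u \<or> w = u1" using Ux by simp
          then show ?thesis
          proof
            assume "w = u"
            then show ?thesis using 1 b(2) u by simp
          qed (use 1 bSH in simp)
        next
          case 2
          then show ?thesis using b(3) Hne by simp
        qed
      qed
      then show ?thesis using H1 by simp
    qed
    then show "case a of (S, H) \<Rightarrow> H \<noteq> {} \<longrightarrow> (H, {}) \<in> SS \<and> (\<exists>!(S', H')\<in>SS. (S', H') \<noteq> (S, H) \<and> H' = H)"
      using aSH by simp
  qed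
qed

end

theorem mainTheorem5:
  fixes X :: "'x set" and V :: "'v set" and A :: "('v \<times> 'v) set"
    and \<rho> :: 'v and \<phi> :: "'x \<Rightarrow> 'v" and r :: "'v \<Rightarrow> real" and i :: nat
  assumes "ranked_cactus X V A \<rho> \<phi> r"
    and "i \<le> ts_size V r"
  shows "polestar_system X (Ssys X V A \<rho> \<phi> r i)"
proof -
  interpret RC X V A \<rho> \<phi> r i by unfold_locales (rule assms(1))
  show ?thesis by (rule polestar)
qed

end
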